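(* Let $\mathbf{X},\mathbf{Y}$ be Banach spaces, $\mathcal{S}\subset\mathbf{X}$, $\mathcal{S}'\subset\mathbf{Y}$, and let $\Phi:\mathcal{S}\to\mathcal{S}'$ be measurable and expansive, i.e., there is $\kappa>0$ with $\|\Phi(\mathbf{x})-\Phi(\mathbf{x}')\|_{\mathbf{Y}}\ge\kappa\|\mathbf{x}-\mathbf{x}'\|_{\mathbf{X}}$ for all $\mathbf{x},\mathbf{x}'\in\mathcal{S}$. If $s_0\ge0$ and $\mathbb{P}$ is a Borel probability measure on $\mathcal{S}$ of growth order $s_0$ (w.r.t. $\mathbf{X}$), then $\mathbb{P}\circ\Phi^{-1}$ is a Borel probability measure on $\mathcal{S}'$ of growth order $s_0$ (w.r.t. $\mathbf{Y}$).
   Context: Subsets of Banach spaces carry the trace of the Borel $\sigma$-algebra of the ambient space (this defines measurability of $\Phi$ and Borel measures on subsets). A Borel probability measure $\mathbb{P}$ on $\mathcal{S}\subset\mathbf{X}$ has (logarithmic) growth order $s_0\in[0,\infty)$ w.r.t. $\mathbf{X}$ if for every $s>s_0$ there are $\varepsilon_0,c>0$ with $\mathbb{P}(\mathcal{S}\cap\mathcal{B}(\mathbf{x},\varepsilon;\mathbf{X}))\le2^{-c\varepsilon^{-1/s}}$ for all $\mathbf{x}\in\mathbf{X}$ and $\varepsilon\in(0,\varepsilon_0)$, where $\mathcal{B}(\mathbf{x},\varepsilon;\mathbf{X})$ is the closed ball. *)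

theory Defs
  imports "HOL-Probability.Probability"
begin

definition borel_prob_on :: "'a::banach measure \<Rightarrow> 'a set \<Rightarrow> bool" where
  "borel_prob_on M S \<longleftrightarrow> prob_space M \<and> space M = S \<and> sets M = sets (restrict_space borel S)"

definition growth_order :: "'a::banach measure \<Rightarrow> 'a set \<Rightarrow> real \<Rightarrow> bool" where
  "growth_order M S s0 \<longleftrightarrow>
     (\<forall>s>s0. \<exists>\<epsilon>0>0. \<exists>c>0. \<forall>x. \<forall>\<epsilon>. 0 < \<epsilon> \<and> \<epsilon> < \<epsilon>0 \<longrightarrow>
        measure M (S \<inter> cball x \<epsilon>) \<le> 2 powr (- c * \<epsilon> powr (- 1 / s)))"

end

theory Submission
  imports Defs
begin

theorem lemmaA1:
  fixes S :: "'a::banach set" and S' :: "'b::banach set"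
    and \<Phi> :: "'a \<Rightarrow> 'b" and P :: "'a measure" and \<kappa> s0 :: real
  assumes meas: "\<Phi> \<in> measurable (restrict_space borel S) (restrict_space borel S')"
    and kappa: "\<kappa> > 0"
    and expansive: "\<forall>x\<in>S. \<forall>x'\<in>S. norm (\<Phi> x - \<Phi> x') \<ge> \<kappa> * norm (x - x')"
    and s0: "s0 \<ge> 0"
    and P: "borel_prob_on P S"
    and growth: "growth_order P S s0"
  shows "borel_prob_on (distr P (restrict_space borel S') \<Phi>) S'
       \<and> growth_order (distr P (restrict_space borel S') \<Phi>) S' s0"
proof -
  from P have ps: "prob_space P" and spP: "space P = S"
    and setsP: "sets P = sets (restrict_space borel S)"
    unfolding borel_prob_on_def by auto
  interpret prob_space P by fact
  have measP: "\<Phi> \<in> measurable P (restrict_space borel S')"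
    using meas measurable_cong_sets[OF setsP refl] by blast
  define Q where "Q = distr P (restrict_space borel S') \<Phi>"
  have "prob_space Q" unfolding Q_def by (rule prob_space_distr[OF measP])
  moreover have "space Q = S'" unfolding Q_def by (simp add: space_restrict_space)
  moreover have "sets Q = sets (restrict_space borel S')" unfolding Q_def by simp
  ultimately have A: "borel_prob_on Q S'" unfolding borel_prob_on_def by simp
  have B: "growth_order Q S' s0"
    unfolding growth_order_def
  proof (intro allI impI)
    fix s assume ss: "s > s0"
    hence spos: "s > 0" using s0 by simp
    from growth ss obtain e0 c where e0: "e0 > 0" and c: "c > 0" and
      H: "\<And>x e. 0 < e \<Longrightarrow> e < e0 \<Longrightarrow> measure P (S \<inter> cball x e) \<le> 2 powr (- c * e powr (- 1 / s))"
      unfolding growth_order_def by blast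
    define c' where "c' = c * (2/\<kappa>) powr (-1/s)"
    have c': "c' > 0" using c kappa unfolding c'_def by simp
    have e0': "e0 * \<kappa> / 2 > 0" using e0 kappa by simp
    show "\<exists>\<epsilon>0>0. \<exists>c>0. \<forall>x \<epsilon>. 0 < \<epsilon> \<and> \<epsilon> < \<epsilon>0 \<longrightarrow>
        measure Q (S' \<inter> cball x \<epsilon>) \<le> 2 powr (- c * \<epsilon> powr (- 1 / s))"
    proof (intro exI conjI allI impI, rule e0', rule c')
      fix y e assume ee: "0 < e \<and> e < e0 * \<kappa> / 2"
      have cb: "S' \<inter> cball y e \<in> sets (restrict_space borel S')"
        unfolding sets_restrict_space by auto
      have eq: "measure Q (S' \<inter> cball y e) = measure P (\<Phi> -` (S' \<inter> cball y e) \<inter> S)"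
        unfolding Q_def using measure_distr[OF measP cb] spP by simp
      define T where "T = \<Phi> -` (S' \<inter> cball y e) \<inter> S"
      show "measure Q (S' \<inter> cball y e) \<le> 2 powr (- c' * e powr (- 1 / s))"
      proof (cases "T = {}")
        case True
        then show ?thesis using eq T_def by simp
      next
        case False
        then obtain x0 where x0: "x0 \<in> T" by blast
        define r where "r = 2 * e / \<kappa>"
        have rpos: "0 < r" and rlt: "r < e0" using ee kappa unfolding r_def
          by (auto simp: field_simps)
        have sub: "T \<subseteq> S \<inter> cball x0 r"
        proof
          fix x assume x: "x \<in> T"
          have "\<kappa> * norm (x - x0) \<le> norm (\<Phi> x - \<Phi> x0)"
            using expansive x x0 T_def by auto
          also have "\<dots> \<le> norm (\<Phi> x - y) + norm (y - \<Phi> x0)" using norm_triangle_ineq[of "\<Phi> x - y" "y - \<Phi> x0"] by simp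
          also have "\<dots> \<le> 2 * e" using x x0 T_def by (auto simp: dist_norm norm_minus_commute)
          finally have "norm (x - x0) \<le> r" unfolding r_def using kappa
            by (simp add: field_simps mult.commute)
          then show "x \<in> S \<inter> cball x0 r" using x T_def by (auto simp: dist_norm norm_minus_commute)
        qed
        have mS: "S \<inter> cball x0 r \<in> sets P" unfolding setsP sets_restrict_space by auto
        have "measure P T \<le> measure P (S \<inter> cball x0 r)"
          by (rule finite_measure_mono[OF sub mS])
        also have "\<dots> \<le> 2 powr (- c * r powr (- 1 / s))" by (rule H[OF rpos rlt])
        also have "r powr (-1/s) = (2/\<kappa>) powr (-1/s) * e powr (-1/s)"
          unfolding r_def using kappa ee by (simp add: powr_mult[symmetric])
        also have "- c * ((2/\<kappa>) powr (-1/s) * e powr (-1/s)) = - c' * e powr (-1/s)"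
          unfolding c'_def by simp
        finally show ?thesis using eq T_def by simp
      qed
    qed
  qed
  show ?thesis using A B Q_def by simp
qed

end
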